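(* For each $n$, let $W\in\mathbb{R}^{n\times n}$ be a random symmetric matrix with zero diagonal whose entries $W_{ij}$, $i<j$, are independent Rademacher random variables (uniform on $\{-1,+1\}$), and let $T=-\frac{\sqrt{n}}{4}\mathrm{Id}_{n\times n}+W$. Let $\kappa>0$ be a constant independent of $n$ such that, with probability tending to $1$ as $n\to\infty$, $$\max_{\substack{S\subseteq[n]\\|S|\leq \kappa n}}\|W_S\|_{2\to2}\leq \frac{1}{8}\sqrt{n},$$ where $W_S$ is the principal submatrix of $W$ indexed by $S$. Then, with probability tending to $1$ as $n\to\infty$, $$\rho_1(T)\leq \frac{34+o(1)}{\kappa^2}\,\frac{1}{\sqrt{n}},$$ where $o(1)$ denotes a quantity tending to $0$ as $n\to\infty$.
   Context: For a self-adjoint matrix $T\in\mathbb{C}^{n\times n}$, $$\rho_1(T):=\sup\left\{\langle Tx,x\rangle:\ x\in\mathbb{C}^n,\ \|x\|_1\leq 1\right\},$$ where $\|x\|_1=\sum_i|x_i|$. $\|M\|_{2\to2}$ is the Euclidean operator norm. *)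

theory Defs
  imports "HOL-Probability.Probability"
begin

text \<open>n x n matrices are represented as functions nat => nat => _ , only entries with
  indices < n being relevant; vectors as nat => _ with indices < n.\<close>

definition sign_space :: "nat \<Rightarrow> (nat \<times> nat \<Rightarrow> real) set" where
  "sign_space n = (PiE {(i,j). i < j \<and> j < n} (\<lambda>_. {-1, 1}))"

definition rademacher_pmf :: "nat \<Rightarrow> (nat \<times> nat \<Rightarrow> real) pmf" where
  "rademacher_pmf n = pmf_of_set (sign_space n)"

definition Wmat :: "(nat \<times> nat \<Rightarrow> real) \<Rightarrow> nat \<Rightarrow> nat \<Rightarrow> real" where
  "Wmat s i j = (if i < j then s (i,j) else if j < i then s (j,i) else 0)"

definition Tmat :: "nat \<Rightarrow> (nat \<times> nat \<Rightarrow> real) \<Rightarrow> nat \<Rightarrow> nat \<Rightarrow> complex" where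
  "Tmat n s i j = complex_of_real ((if i = j then - sqrt (real n) / 4 else 0) + Wmat s i j)"

text \<open>rho_1(T) = sup { <Tx,x> : x in C^n, ||x||_1 <= 1 }, with <Tx,x> = sum_i (Tx)_i conj(x_i)
  (real since T is self-adjoint).\<close>
definition rho1 :: "nat \<Rightarrow> (nat \<Rightarrow> nat \<Rightarrow> complex) \<Rightarrow> real" where
  "rho1 n T = Sup {r. \<exists>x :: nat \<Rightarrow> complex. (\<Sum>i<n. norm (x i)) \<le> 1 \<and>
      complex_of_real r = (\<Sum>i<n. (\<Sum>j<n. T i j * x j) * cnj (x i))}"

definition opnorm_sub :: "(nat \<Rightarrow> nat \<Rightarrow> real) \<Rightarrow> nat set \<Rightarrow> real" where
  "opnorm_sub M S = Sup {sqrt (\<Sum>i\<in>S. (norm (\<Sum>j\<in>S. complex_of_real (M i j) * x j))\<^sup>2) | x :: nat \<Rightarrow> complex.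
      (\<Sum>j\<in>S. (norm (x j))\<^sup>2) \<le> 1}"

end

theory Submission
  imports Defs
begin


lemma sort_perm:
  fixes f :: "nat \<Rightarrow> real"
  shows "\<exists>pos. bij_betw pos {..<n} {..<n} \<and> (\<forall>i<n. \<forall>j<n. pos i < pos j \<longrightarrow> f j \<le> f i)"
proof -
  define L where "L = sort_key (\<lambda>i. - f i) [0..<n]"
  have dL: "distinct L" and lL: "length L = n" and sL: "set L = {..<n}"
    by (auto simp: L_def)
  have so: "sorted (map (\<lambda>i. - f i) L)" by (simp add: L_def)
  have bg: "bij_betw ((!) L) {..<n} {..<n}"
    using bij_betw_nth[OF dL] lL sL by auto
  define pos where "pos = the_inv_into {..<n} ((!) L)"
  have bp: "bij_betw pos {..<n} {..<n}" unfolding pos_def by (rule bij_betw_the_inv_into[OF bg])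
  have inv: "L ! (pos i) = i" if "i < n" for i
    unfolding pos_def using bg that
    by (metis bij_betw_def f_the_inv_into_f lessThan_iff)
  have "f j \<le> f i" if "i < n" "j < n" "pos i < pos j" for i j
  proof -
    have "pos j < n" using bp that(2) by (auto dest: bij_betwE)
    then have "map (\<lambda>i. - f i) L ! (pos i) \<le> map (\<lambda>i. - f i) L ! (pos j)"
      using sorted_nth_mono[OF so, of "pos i" "pos j"] that lL by auto
    then show ?thesis using inv[OF that(1)] inv[OF that(2)] \<open>pos j < n\<close> that lL by auto
  qed
  then show ?thesis using bp by blast
qed

lemma opnorm_scaled:
  fixes W :: "nat \<Rightarrow> nat \<Rightarrow> real"
  assumes fS: "finite S" and op: "opnorm_sub W S \<le> b"
  shows "L2_set (\<lambda>i. norm (\<Sum>j\<in>S. complex_of_real (W i j) * w j)) S \<le> b * L2_set (\<lambda>j. norm (w j)) S"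
proof -
  define K where "K = sqrt (\<Sum>i\<in>S. (\<Sum>j\<in>S. \<bar>W i j\<bar>)\<^sup>2)"
  define Z where "Z = {sqrt (\<Sum>i\<in>S. (norm (\<Sum>j\<in>S. complex_of_real (W i j) * x j))\<^sup>2) | x :: nat \<Rightarrow> complex.
      (\<Sum>j\<in>S. (norm (x j))\<^sup>2) \<le> 1}"
  have bdd: "bdd_above Z"
  proof (rule bdd_aboveI)
    fix z assume "z \<in> Z"
    then obtain x where z: "z = sqrt (\<Sum>i\<in>S. (norm (\<Sum>j\<in>S. complex_of_real (W i j) * x j))\<^sup>2)"
      and x1: "(\<Sum>j\<in>S. (norm (x j))\<^sup>2) \<le> 1" unfolding Z_def by blast
    have xj: "norm (x j) \<le> 1" if "j \<in> S" for j
    proof -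
      have "(norm (x j))\<^sup>2 \<le> (\<Sum>j\<in>S. (norm (x j))\<^sup>2)"
        using that fS by (intro member_le_sum) auto
      then have "(norm (x j))\<^sup>2 \<le> 1\<^sup>2" using x1 by simp
      then show ?thesis by (rule power2_le_imp_le) simp
    qed
    have "norm (\<Sum>j\<in>S. complex_of_real (W i j) * x j) \<le> (\<Sum>j\<in>S. \<bar>W i j\<bar>)" for i
    proof -
      have "norm (\<Sum>j\<in>S. complex_of_real (W i j) * x j) \<le> (\<Sum>j\<in>S. norm (complex_of_real (W i j) * x j))"
        by (rule norm_sum)
      also have "\<dots> \<le> (\<Sum>j\<in>S. \<bar>W i j\<bar>)"
        by (intro sum_mono) (auto simp: norm_mult intro: mult_left_le[OF xj])
      finally show ?thesis .
    qed
    then have "(\<Sum>i\<in>S. (norm (\<Sum>j\<in>S. complex_of_real (W i j) * x j))\<^sup>2) \<le> (\<Sum>i\<in>S. (\<Sum>j\<in>S. \<bar>W i j\<bar>)\<^sup>2)"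
      by (intro sum_mono power_mono) auto
    then show "z \<le> K" unfolding z K_def by simp
  qed
  show ?thesis
  proof (cases "L2_set (\<lambda>j. norm (w j)) S = 0")
    case True
    then have "\<forall>j\<in>S. w j = 0" using L2_set_eq_0_iff[OF fS] by auto
    then show ?thesis by (simp add: L2_set_def)
  next
    case False
    define lam where "lam = L2_set (\<lambda>j. norm (w j)) S"
    have lp: "lam > 0" using False L2_set_nonneg unfolding lam_def by (metis less_eq_real_def)
    define x where "x j = w j / complex_of_real lam" for j
    have "(\<Sum>j\<in>S. (norm (x j))\<^sup>2) = (\<Sum>j\<in>S. (norm (w j))\<^sup>2) / lam\<^sup>2"
      using lp by (simp add: x_def norm_divide power_divide sum_divide_distrib)
    also have "(\<Sum>j\<in>S. (norm (w j))\<^sup>2) = lam\<^sup>2"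
      unfolding lam_def L2_set_def by (simp add: sum_nonneg)
    finally have x1: "(\<Sum>j\<in>S. (norm (x j))\<^sup>2) \<le> 1" using lp by simp
    have "sqrt (\<Sum>i\<in>S. (norm (\<Sum>j\<in>S. complex_of_real (W i j) * x j))\<^sup>2) \<in> Z"
      unfolding Z_def using x1 by blast
    then have "sqrt (\<Sum>i\<in>S. (norm (\<Sum>j\<in>S. complex_of_real (W i j) * x j))\<^sup>2) \<le> b"
      using cSup_upper[OF _ bdd] op unfolding opnorm_sub_def Z_def[symmetric] by (meson order_trans)
    moreover have "(\<Sum>j\<in>S. complex_of_real (W i j) * x j) = (\<Sum>j\<in>S. complex_of_real (W i j) * w j) / complex_of_real lam" for i
      by (simp add: x_def sum_divide_distrib)
    ultimately have "L2_set (\<lambda>i. norm (\<Sum>j\<in>S. complex_of_real (W i j) * w j)) S / lam \<le> b"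
      using lp by (simp add: L2_set_def norm_divide power_divide sum_divide_distrib[symmetric] real_sqrt_divide)
    then show ?thesis using lp unfolding lam_def[symmetric] by (simp add: divide_le_eq mult.commute)
  qed
qed



lemma bilin:
  fixes W :: "nat \<Rightarrow> nat \<Rightarrow> real"
  assumes fS: "finite S" and AS: "A \<subseteq> S" and CS: "C \<subseteq> S" and op: "opnorm_sub W S \<le> b"
  shows "cmod (\<Sum>i\<in>A. (\<Sum>j\<in>C. complex_of_real (W i j) * u j) * cnj (v i))
     \<le> b * L2_set (\<lambda>j. cmod (u j)) C * L2_set (\<lambda>i. cmod (v i)) A"
proof -
  define w where "w j = (if j \<in> C then u j else 0)" for j
  define y where "y i = (\<Sum>j\<in>S. complex_of_real (W i j) * w j)" for i
  have fA: "finite A" and fC: "finite C" using fS AS CS finite_subset by auto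
  have yC: "(\<Sum>j\<in>C. complex_of_real (W i j) * u j) = y i" for i
  proof -
    have "(\<Sum>j\<in>S. complex_of_real (W i j) * w j) = (\<Sum>j\<in>C. complex_of_real (W i j) * w j)"
      using CS fS by (intro sum.mono_neutral_right) (auto simp: w_def)
    also have "\<dots> = (\<Sum>j\<in>C. complex_of_real (W i j) * u j)" by (simp add: w_def)
    finally show ?thesis by (simp add: y_def)
  qed
  have wl: "L2_set (\<lambda>j. cmod (w j)) S = L2_set (\<lambda>j. cmod (u j)) C"
  proof -
    have "(\<Sum>j\<in>S. (cmod (w j))\<^sup>2) = (\<Sum>j\<in>C. (cmod (w j))\<^sup>2)"
      using CS fS by (intro sum.mono_neutral_right) (auto simp: w_def)
    then show ?thesis by (simp add: L2_set_def w_def)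
  qed
  have "cmod (\<Sum>i\<in>A. y i * cnj (v i)) \<le> (\<Sum>i\<in>A. cmod (y i * cnj (v i)))" by (rule norm_sum)
  also have "\<dots> = (\<Sum>i\<in>A. \<bar>cmod (y i)\<bar> * \<bar>cmod (v i)\<bar>)" by (simp add: norm_mult)
  also have "\<dots> \<le> L2_set (\<lambda>i. cmod (y i)) A * L2_set (\<lambda>i. cmod (v i)) A" by (rule L2_set_mult_ineq)
  also have "\<dots> \<le> L2_set (\<lambda>i. cmod (y i)) S * L2_set (\<lambda>i. cmod (v i)) A"
  proof (intro mult_right_mono)
    show "L2_set (\<lambda>i. cmod (y i)) A \<le> L2_set (\<lambda>i. cmod (y i)) S"
      unfolding L2_set_def using fS AS by (intro real_sqrt_le_mono sum_mono2) auto
  qed auto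
  also have "\<dots> \<le> (b * L2_set (\<lambda>j. cmod (w j)) S) * L2_set (\<lambda>i. cmod (v i)) A"
    using opnorm_scaled[OF fS op, of w] unfolding y_def by (intro mult_right_mono) auto
  finally show ?thesis using yC wl by simp
qed



lemma core:
  fixes W :: "nat \<Rightarrow> nat \<Rightarrow> real" and x :: "nat \<Rightarrow> complex" and n h :: nat and b :: real
  assumes h1: "h \<ge> 1" and b0: "b \<ge> 0" and l1: "(\<Sum>i<n. cmod (x i)) \<le> 1"
  and bil: "\<And>A C u v. A \<subseteq> {..<n} \<Longrightarrow> C \<subseteq> {..<n} \<Longrightarrow> card A \<le> h \<Longrightarrow> card C \<le> h \<Longrightarrow>
      cmod (\<Sum>i\<in>A. (\<Sum>j\<in>C. complex_of_real (W i j) * u j) * cnj (v i))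
        \<le> b * L2_set (\<lambda>j. cmod (u j)) C * L2_set (\<lambda>i. cmod (v i)) A"
  shows "Re (\<Sum>i<n. (\<Sum>j<n. complex_of_real (W i j) * x j) * cnj (x i)) - 2*b*(\<Sum>i<n. (cmod (x i))\<^sup>2)
     \<le> (if n \<le> h then 0 else 2*b/h)"
proof -
  obtain pos where bij: "bij_betw pos {..<n} {..<n}"
    and mono: "\<forall>i<n. \<forall>j<n. pos i < pos j \<longrightarrow> cmod (x j) \<le> cmod (x i)"
    using sort_perm[of n "\<lambda>i. cmod (x i)"] by blast
  have posn: "pos i < n" if "i < n" for i using bij that by (auto dest: bij_betwE)
  have injp: "inj_on pos {..<n}" using bij by (rule bij_betw_imp_inj_on)
  define B where "B a = {i \<in> {..<n}. pos i div h = a}" for a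
  define s where "s a = L2_set (\<lambda>i. cmod (x i)) (B a)" for a
  define l where "l a = (\<Sum>i\<in>B a. cmod (x i))" for a
  have Bsub: "B a \<subseteq> {..<n}" for a by (auto simp: B_def)
  have fB: "finite (B a)" for a using Bsub finite_subset by blast
  have posB: "pos ` B a \<subseteq> {a*h..<a*h+h}" for a
  proof
    fix p assume "p \<in> pos ` B a"
    then obtain i where pi: "p = pos i" "pos i div h = a" by (auto simp: B_def)
    have "p div h * h + p mod h = p" by (rule div_mult_mod_eq)
    moreover have "p mod h < h" using h1 by simp
    ultimately show "p \<in> {a*h..<a*h+h}" using pi by auto
  qed
  have Bcard: "card (B a) \<le> h" for a
  proof -
    have "card (B a) = card (pos ` B a)" using inj_on_subset[OF injp Bsub] by (simp add: card_image)
    also have "\<dots> \<le> card {a*h..<a*h+h}" using posB by (intro card_mono) auto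
    finally show ?thesis by simp
  qed
  have grp: "(\<Sum>i<n. g i) = (\<Sum>a<n. \<Sum>i\<in>B a. g i)" for g :: "nat \<Rightarrow> 'z::comm_monoid_add"
  proof -
    have "(\<lambda>i. pos i div h) ` {..<n} \<subseteq> {..<n}"
      using posn by (auto intro: le_less_trans[OF div_le_dividend])
    from sum.group[OF _ _ this, of g] show ?thesis by (simp add: B_def)
  qed
  have bil2: "cmod (\<Sum>i\<in>B a. (\<Sum>j\<in>B c. complex_of_real (W i j) * x j) * cnj (x i)) \<le> b * s c * s a" for a c
    unfolding s_def by (rule bil[OF Bsub Bsub Bcard Bcard])
  have Wsplit: "(\<Sum>i<n. (\<Sum>j<n. complex_of_real (W i j) * x j) * cnj (x i))
      = (\<Sum>a<n. \<Sum>c<n. (\<Sum>i\<in>B a. (\<Sum>j\<in>B c. complex_of_real (W i j) * x j) * cnj (x i)))"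
  proof -
    have "(\<Sum>i<n. (\<Sum>j<n. complex_of_real (W i j) * x j) * cnj (x i))
        = (\<Sum>i<n. \<Sum>c<n. (\<Sum>j\<in>B c. complex_of_real (W i j) * x j) * cnj (x i))"
      by (subst grp) (simp add: sum_distrib_right)
    also have "\<dots> = (\<Sum>a<n. \<Sum>i\<in>B a. \<Sum>c<n. (\<Sum>j\<in>B c. complex_of_real (W i j) * x j) * cnj (x i))"
      by (rule grp)
    also have "\<dots> = (\<Sum>a<n. \<Sum>c<n. \<Sum>i\<in>B a. (\<Sum>j\<in>B c. complex_of_real (W i j) * x j) * cnj (x i))"
      by (intro sum.cong refl sum.swap)
    finally show ?thesis by (simp add: sum_distrib_right)
  qed
  have WRe: "Re (\<Sum>i<n. (\<Sum>j<n. complex_of_real (W i j) * x j) * cnj (x i)) \<le> b * (\<Sum>a<n. s a)\<^sup>2"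
  proof -
    let ?z = "(\<Sum>i<n. (\<Sum>j<n. complex_of_real (W i j) * x j) * cnj (x i))"
    have "Re ?z \<le> cmod ?z" by (rule complex_Re_le_cmod)
    also have "\<dots> \<le> (\<Sum>a<n. \<Sum>c<n. cmod (\<Sum>i\<in>B a. (\<Sum>j\<in>B c. complex_of_real (W i j) * x j) * cnj (x i)))"
      unfolding Wsplit by (rule order_trans[OF norm_sum sum_mono[OF norm_sum]])
    also have "\<dots> \<le> (\<Sum>a<n. \<Sum>c<n. b * s c * s a)"
      by (intro sum_mono bil2)
    also have "\<dots> = b * (\<Sum>a<n. s a)\<^sup>2"
      by (simp add: power2_eq_square sum_product sum_distrib_left mult_ac)
    finally show ?thesis .
  qed
  have N2: "(\<Sum>i<n. (cmod (x i))\<^sup>2) = (\<Sum>a<n. (s a)\<^sup>2)"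
    by (subst grp) (simp add: s_def L2_set_def sum_nonneg)
  have l_sum: "(\<Sum>a<n. l a) \<le> 1" using l1 by (subst (asm) grp) (simp add: l_def)
  have s0: "s a \<ge> 0" for a by (simp add: s_def)
  have l0: "l a \<ge> 0" for a by (simp add: l_def sum_nonneg)
  have sa: "s a \<le> l (a-1) / sqrt h" if a1: "1 \<le> a" for a
  proof (cases "B a = {}")
    case True
    then show ?thesis using l0 by (simp add: s_def)
  next
    case False
    have key: "h * cmod (x i) \<le> l (a-1)" if iB: "i \<in> B a" for i
    proof -
      have ilt: "i < n" and pia: "pos i div h = a" using iB by (auto simp: B_def)
      have ge: "a*h \<le> pos i" using pia div_mult_mod_eq[of "pos i" h] by (metis le_add1)
      have img: "pos ` B (a-1) = {(a-1)*h..<(a-1)*h+h}"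
      proof
        show "pos ` B (a-1) \<subseteq> {(a-1)*h..<(a-1)*h+h}" by (rule posB)
        show "{(a-1)*h..<(a-1)*h+h} \<subseteq> pos ` B (a-1)"
        proof
          fix p assume p: "p \<in> {(a-1)*h..<(a-1)*h+h}"
          have "(a-1)*h+h = a*h" using a1 by (cases a) auto
          then have "p < n" using p ge posn[OF ilt] by auto
          then obtain j where j: "j < n" "pos j = p" using bij_betw_imp_surj_on[OF bij] by (metis imageE lessThan_iff)
          have "h*(a-1) \<le> p" "p < h * Suc (a-1)" using p by (auto simp: mult.commute)
          then have "p div h = a - 1" by (rule div_nat_eqI)
          then show "p \<in> pos ` B (a-1)" using j by (auto simp: B_def)
        qed
      qed
      have cB: "card (B (a-1)) = h"
      proof -
        have "card (B (a-1)) = card (pos ` B (a-1))" using inj_on_subset[OF injp Bsub] by (simp add: card_image)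
        then show ?thesis using img by simp
      qed
      have "cmod (x i) \<le> cmod (x j)" if jB: "j \<in> B (a-1)" for j
      proof -
        have "j < n" "pos j div h = a - 1" using jB by (auto simp: B_def)
        have "pos j < pos i"
        proof (rule ccontr)
          assume "\<not> pos j < pos i"
          then have "pos i div h \<le> pos j div h" by (simp add: div_le_mono)
          then show False using pia a1 \<open>pos j div h = a - 1\<close> by simp
        qed
        then show ?thesis using mono ilt \<open>j < n\<close> by blast
      qed
      then have "(\<Sum>j\<in>B (a-1). cmod (x i)) \<le> l (a-1)" unfolding l_def by (intro sum_mono) auto
      then show ?thesis using cB by simp
    qed
    have "(s a)\<^sup>2 = (\<Sum>i\<in>B a. (cmod (x i))\<^sup>2)" by (simp add: s_def L2_set_def sum_nonneg)
    also have "\<dots> \<le> (\<Sum>i\<in>B a. (l (a-1) / h)\<^sup>2)"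
    proof (intro sum_mono power_mono)
      fix i assume "i \<in> B a"
      from key[OF this] h1 show "cmod (x i) \<le> l (a-1) / h" by (simp add: field_simps)
    qed auto
    also have "\<dots> = card (B a) * (l (a-1) / h)\<^sup>2" by simp
    also have "\<dots> \<le> h * (l (a-1) / h)\<^sup>2" using Bcard by (intro mult_right_mono) auto
    also have "\<dots> = (l (a-1) / sqrt h)\<^sup>2" using h1 by (simp add: power2_eq_square field_simps)
    finally show ?thesis by (rule power2_le_imp_le) (use l0 in auto)
  qed
  define t where "t = (\<Sum>a\<in>{1..<n}. s a)"
  have t0: "t \<ge> 0" unfolding t_def using s0 by (simp add: sum_nonneg)
  have tle: "t \<le> 1 / sqrt h"
  proof -
    have "t \<le> (\<Sum>a\<in>{1..<n}. l (a-1) / sqrt h)" unfolding t_def by (intro sum_mono sa) auto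
    also have "\<dots> = (\<Sum>a\<in>{1..<n}. l (a-1)) / sqrt h" by (simp add: sum_divide_distrib)
    also have "(\<Sum>a\<in>{1..<n}. l (a-1)) \<le> (\<Sum>a<n. l a)"
    proof -
      have "(\<Sum>a\<in>{1..<n}. l (a-1)) = (\<Sum>a\<in>{0..<n-1}. l a)"
        by (rule sum.reindex_bij_witness[where i="\<lambda>a. a+1" and j="\<lambda>a. a-1"]) auto
      also have "\<dots> \<le> (\<Sum>a<n. l a)" using l0 by (intro sum_mono2) auto
      finally show ?thesis .
    qed
    then have "(\<Sum>a\<in>{1..<n}. l (a-1)) / sqrt h \<le> 1 / sqrt h"
      using l_sum by (intro divide_right_mono) auto
    finally show ?thesis .
  qed
  have tz: "t = 0" if "n \<le> h"
  proof -
    have "B a = {}" if "a \<ge> 1" for a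
    proof -
      have "pos i div h = 0" if "i < n" for i using posn[OF that] \<open>n \<le> h\<close> by simp
      then show ?thesis using \<open>a \<ge> 1\<close> by (auto simp: B_def)
    qed
    then show ?thesis unfolding t_def by (simp add: s_def)
  qed
  show ?thesis
  proof (cases "n = 0")
    case True then show ?thesis using b0 h1 by simp
  next
    case False
    have split: "(\<Sum>a<n. f a) = f 0 + (\<Sum>a\<in>{1..<n}. f a)" for f :: "nat \<Rightarrow> real"
    proof -
      have "{..<n} = insert 0 {1..<n}" using False by auto
      then show ?thesis by simp
    qed
    have sq: "(s 0)\<^sup>2 \<le> (\<Sum>a<n. (s a)\<^sup>2)"
      using split[of "\<lambda>a. (s a)\<^sup>2"] by (simp add: sum_nonneg)
    have st: "(\<Sum>a<n. s a) = s 0 + t" using split[of s] unfolding t_def .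
    have m2: "2*b*(s 0)\<^sup>2 \<le> 2*b*(\<Sum>i<n. (cmod (x i))\<^sup>2)"
      unfolding N2 using b0 sq by (intro mult_left_mono) auto
    have "Re (\<Sum>i<n. (\<Sum>j<n. complex_of_real (W i j) * x j) * cnj (x i)) - 2*b*(\<Sum>i<n. (cmod (x i))\<^sup>2)
       \<le> b * (s 0 + t)\<^sup>2 - 2*b*(s 0)\<^sup>2"
      using WRe m2 unfolding st by linarith
    also have "\<dots> \<le> 2*b*t\<^sup>2"
    proof -
      have e: "(s 0 + t)\<^sup>2 - 2*(s 0)\<^sup>2 = 2*t\<^sup>2 - (s 0 - t)\<^sup>2"
        by (simp add: power2_eq_square algebra_simps)
      have "(s 0 + t)\<^sup>2 - 2*(s 0)\<^sup>2 \<le> 2*t\<^sup>2" unfolding e by simp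
      then have "b * ((s 0 + t)\<^sup>2 - 2*(s 0)\<^sup>2) \<le> b * (2*t\<^sup>2)" using b0 by (rule mult_left_mono)
      then show ?thesis by (simp add: algebra_simps)
    qed
    also have "\<dots> \<le> (if n \<le> h then 0 else 2*b/h)"
    proof (cases "n \<le> h")
      case True then show ?thesis using tz by simp
    next
      case F: False
      have "t\<^sup>2 \<le> (1 / sqrt h)\<^sup>2" using tle t0 by (intro power_mono) auto
      then have "t\<^sup>2 \<le> 1 / h" using h1 by (simp add: power_divide)
      then have "2*b*t\<^sup>2 \<le> 2*b*(1/h)" using b0 by (intro mult_left_mono) auto
      then show ?thesis using F by simp
    qed
    finally show ?thesis .
  qed
qed



lemma Texp:
  "(\<Sum>i<n. (\<Sum>j<n. Tmat n s i j * x j) * cnj (x i))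
   = complex_of_real (-(sqrt (real n)/4) * (\<Sum>i<n. (cmod (x i))\<^sup>2))
     + (\<Sum>i<n. (\<Sum>j<n. complex_of_real (Wmat s i j) * x j) * cnj (x i))"
proof -
  have row: "(\<Sum>j<n. Tmat n s i j * x j) = complex_of_real (-(sqrt (real n)/4)) * x i
      + (\<Sum>j<n. complex_of_real (Wmat s i j) * x j)" if "i < n" for i
  proof -
    have "(\<Sum>j<n. Tmat n s i j * x j) = (\<Sum>j<n. (if i = j then complex_of_real (-(sqrt (real n)/4)) * x j else 0)
       + complex_of_real (Wmat s i j) * x j)"
      by (intro sum.cong refl) (simp add: Tmat_def distrib_right)
    also have "\<dots> = complex_of_real (-(sqrt (real n)/4)) * x i + (\<Sum>j<n. complex_of_real (Wmat s i j) * x j)"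
      using that by (simp add: sum.distrib)
    finally show ?thesis .
  qed
  have "(\<Sum>i<n. (\<Sum>j<n. Tmat n s i j * x j) * cnj (x i))
      = (\<Sum>i<n. complex_of_real (-(sqrt (real n)/4)) * (x i * cnj (x i))
           + (\<Sum>j<n. complex_of_real (Wmat s i j) * x j) * cnj (x i))"
    by (intro sum.cong refl) (subst row, simp, simp add: algebra_simps)
  also have "\<dots> = (\<Sum>i<n. complex_of_real (-(sqrt (real n)/4) * (cmod (x i))\<^sup>2)
           + (\<Sum>j<n. complex_of_real (Wmat s i j) * x j) * cnj (x i))"
    by (intro sum.cong refl) (simp add: complex_norm_square[symmetric])
  also have "\<dots> = complex_of_real (-(sqrt (real n)/4) * (\<Sum>i<n. (cmod (x i))\<^sup>2))
     + (\<Sum>i<n. (\<Sum>j<n. complex_of_real (Wmat s i j) * x j) * cnj (x i))"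
    by (simp only: sum.distrib of_real_sum[symmetric] sum_distrib_left)
  finally show ?thesis .
qed

lemma det:
  fixes \<kappa> :: real and n :: nat
  assumes kp: "\<kappa> > 0" and kn: "\<kappa> * real n \<ge> 3"
    and H: "\<forall>S. S \<subseteq> {..<n} \<and> real (card S) \<le> \<kappa> * real n \<longrightarrow> opnorm_sub (Wmat s) S \<le> sqrt (real n) / 8"
  shows "rho1 n (Tmat n s) \<le> 34 / \<kappa>\<^sup>2 * (1 / sqrt (real n))"
proof -
  have n1: "n \<ge> 1" using kn kp by (cases n) auto
  define b where "b = sqrt (real n) / 8"
  have b0: "b \<ge> 0" by (simp add: b_def)
  define h where "h = (if \<kappa> \<ge> 1 then n else nat \<lfloor>\<kappa> * real n / 2\<rfloor>)"
  have h1: "h \<ge> 1"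
  proof (cases "\<kappa> \<ge> 1")
    case True then show ?thesis using n1 by (simp add: h_def)
  next
    case False
    have "1 \<le> \<lfloor>\<kappa> * real n / 2\<rfloor>" using kn by linarith
    then have "1 \<le> nat \<lfloor>\<kappa> * real n / 2\<rfloor>" by (simp add: le_nat_iff)
    then show ?thesis using False by (simp add: h_def)
  qed
  have hcard: "real (card (A \<union> C)) \<le> \<kappa> * real n"
    if "A \<subseteq> {..<n}" "C \<subseteq> {..<n}" "card A \<le> h" "card C \<le> h" for A C
  proof (cases "\<kappa> \<ge> 1")
    case True
    have "card (A \<union> C) \<le> n" using that card_mono[of "{..<n}" "A \<union> C"] by auto
    then have "real (card (A \<union> C)) \<le> real n" by simp
    also have "\<dots> \<le> \<kappa> * real n" using True by (simp add: mult_le_cancel_right1)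
    finally show ?thesis .
  next
    case False
    have "card (A \<union> C) \<le> card A + card C" by (rule card_Un_le)
    also have "\<dots> \<le> 2 * h" using that by simp
    finally have "real (card (A \<union> C)) \<le> 2 * real h" by linarith
    also have "real h \<le> \<kappa> * real n / 2" using False kp
      by (simp add: h_def) linarith
    finally show ?thesis by simp
  qed
  have bil: "cmod (\<Sum>i\<in>A. (\<Sum>j\<in>C. complex_of_real (Wmat s i j) * u j) * cnj (v i))
        \<le> b * L2_set (\<lambda>j. cmod (u j)) C * L2_set (\<lambda>i. cmod (v i)) A"
    if "A \<subseteq> {..<n}" "C \<subseteq> {..<n}" "card A \<le> h" "card C \<le> h" for A C u v
  proof -
    have "opnorm_sub (Wmat s) (A \<union> C) \<le> b"
      using H hcard[OF that] that unfolding b_def by auto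
    moreover have "finite (A \<union> C)" using that finite_subset by blast
    ultimately show ?thesis by (intro bilin) auto
  qed
  have bound: "(if n \<le> h then 0 else 2*b/h) \<le> 34 / \<kappa>\<^sup>2 * (1 / sqrt (real n))"
  proof (cases "n \<le> h")
    case True then show ?thesis by simp
  next
    case False
    then have k1: "\<kappa> < 1" by (auto simp: h_def split: if_splits)
    have hr: "real h \<ge> \<kappa> * real n / 2 - 1" using k1 by (simp add: h_def) linarith
    have hp: "real h > 0" using h1 by simp
    have sn: "sqrt (real n) > 0" using n1 by simp
    have "\<kappa> * \<kappa> \<le> \<kappa>" using k1 kp by (intro mult_left_le_one_le) auto
    then have "\<kappa>\<^sup>2 * real n \<le> \<kappa> * real n" by (intro mult_right_mono) (auto simp: power2_eq_square)
    also have "\<dots> \<le> 136 * real h" using hr kn by linarith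
    finally have key: "\<kappa>\<^sup>2 * real n \<le> 136 * real h" .
    have "2*b/h = sqrt (real n) / (4 * real h)" by (simp add: b_def)
    also have "\<dots> \<le> 34 / \<kappa>\<^sup>2 * (1 / sqrt (real n))"
    proof -
      have e: "sqrt (real n) * (\<kappa>\<^sup>2 * sqrt (real n)) = (sqrt (real n) * sqrt (real n)) * \<kappa>\<^sup>2"
        by (simp only: mult_ac)
      have "sqrt (real n) * (\<kappa>\<^sup>2 * sqrt (real n)) \<le> 34 * (4 * real h)"
        unfolding e using key by (simp add: mult.commute)
      then show ?thesis using hp sn kp by (simp add: field_simps)
    qed
    finally show ?thesis using False by simp
  qed
  define R where "R = {r. \<exists>x :: nat \<Rightarrow> complex. (\<Sum>i<n. norm (x i)) \<le> 1 \<and>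
      complex_of_real r = (\<Sum>i<n. (\<Sum>j<n. Tmat n s i j * x j) * cnj (x i))}"
  have "0 \<in> R" unfolding R_def by (rule CollectI, rule exI[of _ "\<lambda>_. 0"]) simp
  have "Sup R \<le> 34 / \<kappa>\<^sup>2 * (1 / sqrt (real n))"
  proof (rule cSup_least)
    show "R \<noteq> {}" using \<open>0 \<in> R\<close> by blast
  next
    fix r assume "r \<in> R"
    then obtain x :: "nat \<Rightarrow> complex" where x1: "(\<Sum>i<n. cmod (x i)) \<le> 1"
      and rx: "complex_of_real r = (\<Sum>i<n. (\<Sum>j<n. Tmat n s i j * x j) * cnj (x i))"
      unfolding R_def by auto
    have "r = Re (complex_of_real r)" by simp
    also have "\<dots> = Re (\<Sum>i<n. (\<Sum>j<n. complex_of_real (Wmat s i j) * x j) * cnj (x i))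
        - 2*b*(\<Sum>i<n. (cmod (x i))\<^sup>2)"
      unfolding rx Texp b_def by simp
    also have "\<dots> \<le> (if n \<le> h then 0 else 2*b/h)"
      by (rule core[OF h1 b0 x1 bil])
    also have "\<dots> \<le> 34 / \<kappa>\<^sup>2 * (1 / sqrt (real n))" by (rule bound)
    finally show "r \<le> 34 / \<kappa>\<^sup>2 * (1 / sqrt (real n))" .
  qed
  then show ?thesis unfolding rho1_def R_def .
qed

theorem lemma3:
  fixes \<kappa> :: real
  assumes kappa_pos: "\<kappa> > 0"
    and hyp: "(\<lambda>n. measure_pmf.prob (rademacher_pmf n)
               {s. \<forall>S. S \<subseteq> {..<n} \<and> real (card S) \<le> \<kappa> * real n \<longrightarrow>
                    opnorm_sub (Wmat s) S \<le> sqrt (real n) / 8}) \<longlonglongrightarrow> 1"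
  shows "\<exists>\<epsilon> :: nat \<Rightarrow> real. \<epsilon> \<longlonglongrightarrow> 0 \<and>
           (\<lambda>n. measure_pmf.prob (rademacher_pmf n)
              {s. rho1 n (Tmat n s) \<le> (34 + \<epsilon> n) / \<kappa>\<^sup>2 * (1 / sqrt (real n))}) \<longlonglongrightarrow> 1"
proof (intro exI conjI)
  show "(\<lambda>_. 0::real) \<longlonglongrightarrow> 0" by simp
  let ?H = "\<lambda>n. {s. \<forall>S. S \<subseteq> {..<n} \<and> real (card S) \<le> \<kappa> * real n \<longrightarrow>
                    opnorm_sub (Wmat s) S \<le> sqrt (real n) / 8}"
  let ?C = "\<lambda>n. {s. rho1 n (Tmat n s) \<le> (34 + (\<lambda>_. 0::real) n) / \<kappa>\<^sup>2 * (1 / sqrt (real n))}"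
  have ev: "eventually (\<lambda>n. \<kappa> * real n \<ge> 3) sequentially"
  proof -
    obtain N :: nat where "real N \<ge> 3 / \<kappa>" using real_arch_simple by blast
    then have "\<kappa> * real n \<ge> 3" if "n \<ge> N" for n
    proof -
      have "3 / \<kappa> \<le> real n" using \<open>real N \<ge> 3 / \<kappa>\<close> that by linarith
      then show ?thesis using kappa_pos by (simp add: field_simps)
    qed
    then show ?thesis unfolding eventually_sequentially by blast
  qed
  have le: "eventually (\<lambda>n. measure_pmf.prob (rademacher_pmf n) (?H n)
            \<le> measure_pmf.prob (rademacher_pmf n) (?C n)) sequentially"
    using ev
  proof (rule eventually_mono)
    fix n assume kn: "\<kappa> * real n \<ge> 3"
    have "?H n \<subseteq> ?C n" using det[OF kappa_pos kn] by auto
    then show "measure_pmf.prob (rademacher_pmf n) (?H n) \<le> measure_pmf.prob (rademacher_pmf n) (?C n)"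
      by (intro measure_pmf.finite_measure_mono) auto
  qed
  show "(\<lambda>n. measure_pmf.prob (rademacher_pmf n) (?C n)) \<longlonglongrightarrow> 1"
  proof (rule tendsto_sandwich[OF le _ hyp])
    show "eventually (\<lambda>n. measure_pmf.prob (rademacher_pmf n) (?C n) \<le> 1) sequentially"
      by (simp add: measure_pmf.prob_le_1)
  qed simp
qed

end
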